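(* Let $X=\{a_1,\dots,a_\ell\}$ be a finite set of $\ell$ distinct points and $N\ge2$. For every $\gamma\in\mathcal{P}_{sym}(X^N)$ there exists a probability measure $\alpha$ on the finite set $\mathcal{P}_{\frac1N}(X)$ such that $$\gamma=\int_{\mathcal{P}_{\frac1N}(X)}\psi_N(\lambda)\,d\alpha(\lambda),$$ and for every $\mu\in\mathcal{P}_{N\text{-}rep}(X^2)$ there exists a probability measure $\alpha$ on $\mathcal{P}_{\frac1N}(X)$ such that $$\mu=\int_{\mathcal{P}_{\frac1N}(X)}\Big(\lambda\otimes\lambda+\frac1{N-1}\big(\lambda\otimes\lambda-\sum_{i=1}^\ell\lambda_i\delta_i\otimes\delta_i\big)\Big)\,d\alpha(\lambda).$$
   Context: $\mathcal{P}(X)$ denotes probability measures on $X$, identified with vectors $(\lambda_i)$, $\lambda_i=\lambda(\{a_i\})$; $\delta_i$ is the Dirac measure at $a_i$; $\mathcal{P}_{\frac1N}(X)=\{\lambda\in\mathcal{P}(X):\lambda_i\in\frac1N\mathbb{Z}\ \forall i\}$. The symmetrization operator is $(S\gamma)(A_1\times\cdots\times A_N)=\frac1{N!}\sum_{\sigma\in S_N}\gamma(A_{\sigma(1)}\times\cdots\times A_{\sigma(N)})$; $\mathcal{P}_{sym}(X^N)$ is the set of probability measures $\gamma$ on $X^N$ with $S\gamma=\gamma$. A probability measure $\mu$ on $X^2$ is $N$-representable if $\mu(A)=\gamma(A\times X^{N-2})$ for all $A\subseteq X^2$ for some $\gamma\in\mathcal{P}_{sym}(X^N)$; $\mathcal{P}_{N\text{-}rep}(X^2)$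 is the set of these. For $\lambda\in\mathcal{P}_{\frac1N}(X)$, $\psi_N(\lambda)=S(\delta_{a_{i_1}}\otimes\cdots\otimes\delta_{a_{i_N}})$ where $i_1\le\dots\le i_N$ is the nondecreasing index sequence in which each $i$ appears exactly $N\lambda_i$ times (equivalently, $\psi_N(\lambda)$ is the unique extreme point of $\mathcal{P}_{sym}(X^N)$ with one-point marginal $\lambda$). *)

theory Defs
  imports Complex_Main "HOL-Combinatorics.Permutations"
begin

text \<open>Measures on finite sets are identified with their point masses.
  Points of X are the elements of a finite type 'a; the linear order on 'a
  is the enumeration a_1 < ... < a_l. Elements of X^N are lists of length N.\<close>

definition pmeas :: "'b set \<Rightarrow> ('b \<Rightarrow> real) \<Rightarrow> bool" where
  "pmeas A f \<longleftrightarrow> (\<forall>x. 0 \<le> f x) \<and> (\<forall>x. x \<notin> A \<longrightarrow> f x = 0) \<and> sum f A = 1"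

definition tuples :: "nat \<Rightarrow> 'a list set" where
  "tuples N = {xs. length xs = N}"

definition symm :: "nat \<Rightarrow> ('a list \<Rightarrow> real) \<Rightarrow> 'a list \<Rightarrow> real" where
  "symm N \<gamma> xs = (if length xs = N then
     (1 / fact N) * (\<Sum>\<sigma>\<in>{\<sigma>. \<sigma> permutes {..<N}}. \<gamma> (map (\<lambda>i. xs ! \<sigma> i) [0..<N]))
   else 0)"

definition Psym :: "nat \<Rightarrow> ('a list \<Rightarrow> real) set" where
  "Psym N = {\<gamma>. pmeas (tuples N) \<gamma> \<and> symm N \<gamma> = \<gamma>}"

definition Nrep :: "nat \<Rightarrow> ('a \<times> 'a \<Rightarrow> real) set" where
  "Nrep N = {\<mu>. pmeas UNIV \<mu> \<and> (\<exists>\<gamma>\<in>Psym N. \<forall>a b.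
      \<mu> (a, b) = (\<Sum>xs\<in>{xs\<in>tuples N. xs ! 0 = a \<and> xs ! 1 = b}. \<gamma> xs))}"

definition P1N :: "nat \<Rightarrow> ('a::finite \<Rightarrow> real) set" where
  "P1N N = {lam. pmeas UNIV lam \<and> (\<forall>i. real N * lam i \<in> \<int>)}"

definition dirac :: "'b \<Rightarrow> 'b \<Rightarrow> real" where
  "dirac y x = (if x = y then 1 else 0)"

definition seqN :: "nat \<Rightarrow> ('a::{finite,linorder} \<Rightarrow> real) \<Rightarrow> 'a list" where
  "seqN N lam = concat (map (\<lambda>a. replicate (nat (round (real N * lam a))) a)
                             (sorted_list_of_set (UNIV :: 'a set)))"

definition psiN :: "nat \<Rightarrow> ('a::{finite,linorder} \<Rightarrow> real) \<Rightarrow> 'a list \<Rightarrow> real" where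
  "psiN N lam = symm N (dirac (seqN N lam))"

end

theory Submission
  imports Defs "HOL-Combinatorics.Multiset_Permutations"
begin

lemma finite_tuples: "finite (tuples N :: ('a::finite) list set)"
proof -
  have "tuples N = {xs. set xs \<subseteq> (UNIV::'a set) \<and> length xs = N}" by (auto simp: tuples_def)
  thus ?thesis using finite_lists_length_eq[of "UNIV::'a set" N] by simp
qed

lemma symm_eq: "length xs = N \<Longrightarrow> symm N f xs = (1 / fact N) * (\<Sum>\<sigma>\<in>{\<sigma>. \<sigma> permutes {..<N}}. f (permute_list \<sigma> xs))"
  by (simp add: symm_def permute_list_def)

lemma symm_perm_inv:
  assumes "\<tau> permutes {..<N}" "length xs = N"
  shows "symm N f (permute_list \<tau> xs) = symm N f xs"
proof -
  have "(\<Sum>\<sigma>\<in>{\<sigma>. \<sigma> permutes {..<N}}. f (permute_list \<sigma> (permute_list \<tau> xs)))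
      = (\<Sum>\<sigma>\<in>{\<sigma>. \<sigma> permutes {..<N}}. f (permute_list (\<tau> \<circ> \<sigma>) xs))"
    by (intro sum.cong refl) (simp add: permute_list_compose assms(2))
  also have "\<dots> = (\<Sum>\<sigma>\<in>{\<sigma>. \<sigma> permutes {..<N}}. f (permute_list \<sigma> xs))"
    using setum_permutations_compose_left[OF assms(1), of "\<lambda>\<sigma>. f (permute_list \<sigma> xs)"] by simp
  finally show ?thesis using assms by (simp add: symm_eq)
qed

lemma sum_permute_list:
  assumes "\<sigma> permutes {..<N}"
  shows "(\<Sum>xs\<in>tuples N. f (permute_list \<sigma> xs)) = (\<Sum>xs\<in>tuples N. f xs)"
proof (rule sum.reindex_bij_witness[of _ "permute_list (inv \<sigma>)" "permute_list \<sigma>"])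
  have iv: "inv \<sigma> permutes {..<N}" using assms by (simp add: permutes_inv)
  fix xs assume "xs \<in> tuples N"
  hence l: "length xs = N" by (simp add: tuples_def)
  show "permute_list (inv \<sigma>) (permute_list \<sigma> xs) = xs"
    using permute_list_compose[of "inv \<sigma>" xs \<sigma>] iv l permutes_inv_o(1)[OF assms] by simp
  show "permute_list \<sigma> (permute_list (inv \<sigma>) xs) = xs"
    using permute_list_compose[of "\<sigma>" xs "inv \<sigma>"] assms l permutes_inv_o(2)[OF assms] by simp
  show "permute_list \<sigma> xs \<in> tuples N" using l by (simp add: tuples_def)
  show "permute_list (inv \<sigma>) xs \<in> tuples N" using l by (simp add: tuples_def)
qed simp

lemma sum_symm: "(\<Sum>xs\<in>tuples N. symm N f xs) = (\<Sum>xs\<in>tuples N. f xs)"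
proof -
  have "(\<Sum>xs\<in>tuples N. symm N f xs) = (\<Sum>xs\<in>tuples N. (1 / fact N) * (\<Sum>\<sigma>\<in>{\<sigma>. \<sigma> permutes {..<N}}. f (permute_list \<sigma> xs)))"
    by (intro sum.cong refl) (simp add: symm_eq tuples_def)
  also have "\<dots> = (1 / fact N) * (\<Sum>\<sigma>\<in>{\<sigma>. \<sigma> permutes {..<N}}. \<Sum>xs\<in>tuples N. f (permute_list \<sigma> xs))"
    by (simp add: sum_distrib_left sum.swap[of _ "tuples N"])
  also have "\<dots> = (1 / fact N) * (\<Sum>\<sigma>\<in>{\<sigma>. \<sigma> permutes {..<N}}. \<Sum>xs\<in>tuples N. f xs)"
    by (simp add: sum_permute_list)
  also have "\<dots> = (\<Sum>xs\<in>tuples N. f xs)"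
    using card_permutations[of "{..<N}" N] by simp
  finally show ?thesis .
qed

lemma symm_dirac_zero:
  assumes "mset xs \<noteq> mset s"
  shows "symm N (dirac s) xs = 0"
proof (cases "length xs = N")
  case True
  have "\<forall>\<sigma>\<in>{\<sigma>. \<sigma> permutes {..<N}}. dirac s (permute_list \<sigma> xs) = 0"
    using assms True by (auto simp: dirac_def)
  then show ?thesis using True by (simp add: symm_eq)
qed (simp add: symm_def)

lemma sum_count_UNIV: "(\<Sum>a\<in>(UNIV::('a::finite) set). count M a) = size M"
proof -
  have "(\<Sum>a\<in>UNIV. count M a) = (\<Sum>a\<in>set_mset M. count M a)"
    by (rule sum.mono_neutral_right) (auto simp: not_in_iff)
  thus ?thesis by (simp add: size_multiset_overloaded_eq)
qed

lemma count_concat_map: "count (mset (concat (map g L))) a = (\<Sum>x\<leftarrow>L. count (mset (g x)) a)"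
  by (induction L) auto

lemma count_seqN: "count (mset (seqN N lam)) a = nat (round (real N * lam a))"
proof -
  let ?g = "\<lambda>a. replicate (nat (round (real N * lam a))) a"
  have "count (mset (seqN N lam)) a = (\<Sum>x\<leftarrow>sorted_list_of_set UNIV. count (mset (?g x)) a)"
    unfolding seqN_def by (rule count_concat_map)
  also have "\<dots> = (\<Sum>x\<in>UNIV. count (mset (?g x)) a)"
    by (simp add: sum_list_distinct_conv_sum_set)
  also have "\<dots> = (\<Sum>x\<in>UNIV. if x = a then nat (round (real N * lam a)) else 0)"
    by (intro sum.cong refl) auto
  finally show ?thesis by simp
qed

lemma P1N_count:
  assumes "lam \<in> P1N N"
  shows "real (count (mset (seqN N lam)) a) = real N * lam a"
proof -
  from assms obtain k where k: "real N * lam a = of_int k" unfolding P1N_def by (auto elim!: Ints_cases)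
  have "lam a \<ge> 0" using assms by (auto simp: P1N_def pmeas_def)
  hence "k \<ge> 0" using k by (metis of_int_0_le_iff of_nat_0_le_iff zero_le_mult_iff)
  thus ?thesis using k by (simp add: count_seqN)
qed

lemma P1N_length:
  assumes "lam \<in> P1N N"
  shows "length (seqN N lam) = N"
proof -
  have "real (length (seqN N lam)) = real (\<Sum>a\<in>UNIV. count (mset (seqN N lam)) a)"
    by (simp add: sum_count_UNIV)
  also have "\<dots> = (\<Sum>a\<in>UNIV. real N * lam a)" using P1N_count[OF assms] by simp
  also have "\<dots> = real N" using assms by (simp add: P1N_def pmeas_def flip: sum_distrib_left)
  finally show ?thesis by simp
qed

definition ty :: "nat \<Rightarrow> 'a list \<Rightarrow> 'a \<Rightarrow> real" where
  "ty N xs = (\<lambda>a. real (count (mset xs) a) / real N)"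

lemma ty_P1N:
  assumes "xs \<in> tuples N" "N > 0"
  shows "ty N (xs::('a::finite) list) \<in> P1N N"
proof -
  have "(\<Sum>a\<in>UNIV. real (count (mset xs) a)) = real N"
    using assms sum_count_UNIV[of "mset xs"] by (simp add: tuples_def flip: of_nat_sum)
  hence "(\<Sum>a\<in>UNIV. ty N xs a) = 1" using assms unfolding ty_def
    by (simp add: flip: sum_divide_distrib)
  thus ?thesis using assms by (auto simp: P1N_def pmeas_def ty_def)
qed

lemma seqN_mset_iff:
  assumes "lam \<in> P1N N" "N > 0"
  shows "mset (seqN N lam) = mset xs \<longleftrightarrow> lam = ty N xs"
proof -
  have "mset (seqN N lam) = mset xs \<longleftrightarrow> (\<forall>a. real (count (mset (seqN N lam)) a) = real (count (mset xs) a))"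
    by (simp add: multiset_eq_iff)
  also have "\<dots> \<longleftrightarrow> (\<forall>a. real N * lam a = real (count (mset xs) a))" using P1N_count[OF assms(1)] by simp
  also have "\<dots> \<longleftrightarrow> lam = ty N xs" using assms(2) by (auto simp: ty_def fun_eq_iff field_simps)
  finally show ?thesis .
qed

lemma ty_eq_iff: "N > 0 \<Longrightarrow> ty N xs = ty N ys \<longleftrightarrow> mset xs = mset ys"
  by (auto simp: ty_def fun_eq_iff multiset_eq_iff)

lemma finite_P1N: "N > 0 \<Longrightarrow> finite (P1N N :: ('a::{finite,linorder} \<Rightarrow> real) set)"
proof -
  assume N: "N > 0"
  have "P1N N \<subseteq> ty N ` (tuples N :: 'a list set)"
  proof
    fix lam :: "'a \<Rightarrow> real" assume l: "lam \<in> P1N N"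
    have "lam = ty N (seqN N lam)" using seqN_mset_iff[OF l N, of "seqN N lam"] by simp
    moreover have "seqN N lam \<in> tuples N" using P1N_length[OF l] by (simp add: tuples_def)
    ultimately show "lam \<in> ty N ` tuples N" by blast
  qed
  thus ?thesis using finite_tuples[of N] by (meson finite_imageI finite_subset)
qed


lemma orbit_tuples: "permutations_of_multiset (mset s) \<subseteq> tuples (length s)"
  by (auto simp: permutations_of_multiset_def tuples_def dest: mset_eq_length)

lemma symm_dirac_orbit:
  fixes s :: "('a::finite) list"
  assumes "length s = N" "mset xs = mset s"
  shows "symm N (dirac s) xs * real (card (permutations_of_multiset (mset s))) = 1"
proof -
  let ?O = "permutations_of_multiset (mset s)"
  have const: "symm N (dirac s) ys = symm N (dirac s) s" if "ys \<in> ?O" for ys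
  proof -
    from that have "mset ys = mset s" by (simp add: permutations_of_multiset_def)
    then obtain p where p: "p permutes {..<length s}" "permute_list p s = ys" by (rule mset_eq_permutation)
    show ?thesis using symm_perm_inv[of p N s] p assms(1) by simp
  qed
  have "1 = (\<Sum>ys\<in>tuples N. dirac s ys)"
  proof -
    have "(\<Sum>ys\<in>tuples N. dirac s ys) = (\<Sum>ys\<in>tuples N. if ys = s then 1 else 0)"
      by (simp add: dirac_def eq_commute)
    also have "\<dots> = 1" using assms(1) finite_tuples[of N] by (subst sum.delta) (simp_all add: tuples_def)
    finally show ?thesis by simp
  qed
  also have "\<dots> = (\<Sum>ys\<in>tuples N. symm N (dirac s) ys)" by (simp add: sum_symm)
  also have "\<dots> = (\<Sum>ys\<in>?O. symm N (dirac s) ys)"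
    using orbit_tuples[of s] assms(1) finite_tuples[of N]
    by (intro sum.mono_neutral_right) (auto simp: permutations_of_multiset_def intro: symm_dirac_zero)
  also have "\<dots> = (\<Sum>ys\<in>?O. symm N (dirac s) s)" by (intro sum.cong refl const)
  also have "\<dots> = symm N (dirac s) xs * real (card ?O)"
    using const[of xs] assms(2) by (simp add: permutations_of_multiset_def)
  finally show ?thesis by simp
qed

lemma part1:
  fixes \<gamma> :: "('a::{finite,linorder}) list \<Rightarrow> real"
  assumes "N > 0" "\<gamma> \<in> Psym N"
  shows "\<exists>\<alpha>. pmeas (P1N N) \<alpha> \<and> (\<forall>xs. \<gamma> xs = (\<Sum>lam\<in>P1N N. \<alpha> lam * psiN N lam xs))"
proof -
  let ?T = "tuples N :: 'a list set"
  let ?P = "P1N N :: ('a \<Rightarrow> real) set"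
  have pm: "pmeas ?T \<gamma>" and sy: "symm N \<gamma> = \<gamma>" using assms(2) by (auto simp: Psym_def)
  have const: "\<gamma> ys = \<gamma> xs" if xT: "xs \<in> ?T" and me: "mset xs = mset ys" for xs ys
  proof -
    obtain p where p: "p permutes {..<length xs}" "permute_list p xs = ys"
      using mset_eq_permutation[OF me[symmetric]] by blast
    have "\<gamma> ys = symm N \<gamma> (permute_list p xs)" using sy p by simp
    also have "\<dots> = symm N \<gamma> xs" using xT p by (intro symm_perm_inv) (auto simp: tuples_def)
    finally show ?thesis using sy by simp
  qed
  define \<alpha> where "\<alpha> lam = (\<Sum>xs\<in>{xs\<in>?T. ty N xs = lam}. \<gamma> xs)" for lam
  have fT: "finite ?T" by (rule finite_tuples)
  have fP: "finite ?P" using assms(1) by (rule finite_P1N)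
  have tyT: "ty N ` ?T \<subseteq> ?P" using ty_P1N assms(1) by blast
  have "pmeas ?P \<alpha>"
    unfolding pmeas_def
  proof (intro conjI allI impI)
    fix lam show "0 \<le> \<alpha> lam" using pm unfolding \<alpha>_def pmeas_def by (simp add: sum_nonneg)
  next
    fix lam assume "lam \<notin> ?P"
    hence e: "{xs\<in>?T. ty N xs = lam} = {}" using tyT by blast
    show "\<alpha> lam = 0" unfolding \<alpha>_def e by simp
  next
    show "sum \<alpha> ?P = 1" unfolding \<alpha>_def using sum.group[OF fT fP tyT, of \<gamma>] pm
      by (simp add: pmeas_def)
  qed
  moreover have "\<gamma> xs = (\<Sum>lam\<in>?P. \<alpha> lam * psiN N lam xs)" for xs
  proof (cases "xs \<in> ?T")
    case False
    hence "\<gamma> xs = 0" using pm by (simp add: pmeas_def)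
    moreover have "psiN N lam xs = 0" for lam using False by (simp add: psiN_def symm_def tuples_def)
    ultimately show ?thesis by simp
  next
    case True
    let ?t = "ty N xs"
    have tP: "?t \<in> ?P" using True assms(1) by (rule ty_P1N)
    have "(\<Sum>lam\<in>?P. \<alpha> lam * psiN N lam xs) = (\<Sum>lam\<in>?P. if lam = ?t then \<alpha> ?t * psiN N ?t xs else 0)"
    proof (intro sum.cong refl)
      fix lam assume l: "lam \<in> ?P"
      show "\<alpha> lam * psiN N lam xs = (if lam = ?t then \<alpha> ?t * psiN N ?t xs else 0)"
      proof (cases "lam = ?t")
        case False
        hence "mset xs \<noteq> mset (seqN N lam)" using seqN_mset_iff[OF l assms(1), of xs] by auto
        thus ?thesis using False by (simp add: psiN_def symm_dirac_zero)
      qed simp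
    qed
    also have "\<dots> = \<alpha> ?t * psiN N ?t xs" using fP tP by simp
    also have "\<alpha> ?t = (\<Sum>ys\<in>permutations_of_multiset (mset xs). \<gamma> ys)"
    proof -
      have "{ys\<in>?T. ty N ys = ?t} = permutations_of_multiset (mset xs)"
        using ty_eq_iff[OF assms(1)] True
        by (auto simp: permutations_of_multiset_def tuples_def dest: mset_eq_length)
      thus ?thesis by (simp add: \<alpha>_def)
    qed
    also have "\<dots> = (\<Sum>ys\<in>permutations_of_multiset (mset xs). \<gamma> xs)"
      by (rule sum.cong[OF refl]) (auto intro: const[OF True] simp: permutations_of_multiset_def)
    also have "\<dots> = real (card (permutations_of_multiset (mset xs))) * \<gamma> xs"
      by simp
    finally have A: "(\<Sum>lam\<in>?P. \<alpha> lam * psiN N lam xs) = real (card (permutations_of_multiset (mset xs))) * \<gamma> xs * psiN N ?t xs" .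
    have ms: "mset (seqN N ?t) = mset xs" using seqN_mset_iff[OF tP assms(1), of xs] by simp
    have ls: "length (seqN N ?t) = N" using P1N_length[OF tP] .
    have "psiN N ?t xs * real (card (permutations_of_multiset (mset (seqN N ?t)))) = 1"
      unfolding psiN_def by (rule symm_dirac_orbit[OF ls ms[symmetric]])
    hence "psiN N ?t xs * real (card (permutations_of_multiset (mset xs))) = 1"
      by (simp only: ms)
    hence "real (card (permutations_of_multiset (mset xs))) * \<gamma> xs * psiN N ?t xs = \<gamma> xs"
      by (simp add: algebra_simps)
    with A show ?thesis by simp
  qed
  ultimately show ?thesis by blast
qed


lemma count_remove_real:
  assumes "a \<in># M"
  shows "real (count (M - {#a#}) b) = real (count M b) - (if a = b then 1 else 0)"
  using assms by (cases "a = b") (auto simp: of_nat_diff Suc_le_eq)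

lemma card_K:
  fixes M :: "'a multiset"
  assumes "size M = N" "N \<ge> 2"
  shows "real (card {xs\<in>permutations_of_multiset M. xs ! 0 = a \<and> xs ! 1 = b}) * real N * (real N - 1)
        = real (count M a) * (real (count M b) - (if a = b then 1 else 0)) * real (card (permutations_of_multiset M))"
proof (cases "a \<in># M \<and> b \<in># M - {#a#}")
  case True
  let ?K = "{xs\<in>permutations_of_multiset M. xs ! 0 = a \<and> xs ! 1 = b}"
  let ?R = "M - {#a#} - {#b#}"
  have MR: "M = add_mset a (add_mset b ?R)" using True
    by (metis insert_DiffM)
  have "?K = (\<lambda>ys. a # b # ys) ` permutations_of_multiset ?R"
  proof
    show "?K \<subseteq> (\<lambda>ys. a # b # ys) ` permutations_of_multiset ?R"
    proof
      fix xs assume xs: "xs \<in> ?K"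
      hence m: "mset xs = M" and x0: "xs ! 0 = a" and x1: "xs ! 1 = b"
        by (auto simp: permutations_of_multiset_def)
      have "length xs = N" using m assms(1) by (metis size_mset)
      then obtain u v ys where e: "xs = u # v # ys" using assms(2)
        by (metis One_nat_def Suc_1 Suc_le_length_iff)
      have "u = a" "v = b" using e x0 x1 by auto
      hence "mset ys = ?R" using m e by auto
      thus "xs \<in> (\<lambda>ys. a # b # ys) ` permutations_of_multiset ?R"
        using e \<open>u = a\<close> \<open>v = b\<close> by (auto simp: permutations_of_multiset_def)
    qed
  next
    show "(\<lambda>ys. a # b # ys) ` permutations_of_multiset ?R \<subseteq> ?K"
      using MR by (auto simp: permutations_of_multiset_def)
  qed
  hence cK: "card ?K = card (permutations_of_multiset ?R)"
    by (simp add: card_image inj_on_def)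
  have r1: "card (permutations_of_multiset M) * count M a = size M * card (permutations_of_multiset (M - {#a#}))"
    using True by (intro card_permutations_of_multiset_remove_aux) auto
  have r2: "card (permutations_of_multiset (M - {#a#})) * count (M - {#a#}) b = size (M - {#a#}) * card (permutations_of_multiset ?R)"
    using True by (intro card_permutations_of_multiset_remove_aux) auto
  have sz: "size (M - {#a#}) = N - 1" using True assms(1) by (simp add: size_Diff_singleton)
  have r1': "real (card (permutations_of_multiset M)) * real (count M a) = real N * real (card (permutations_of_multiset (M - {#a#})))"
    using r1 assms(1) by (metis of_nat_mult)
  have r2': "real (card (permutations_of_multiset (M - {#a#}))) * (real (count M b) - (if a = b then 1 else 0)) = (real N - 1) * real (card (permutations_of_multiset ?R))"
  proof -
    have "real (card (permutations_of_multiset (M - {#a#}))) * real (count (M - {#a#}) b) = real (size (M - {#a#})) * real (card (permutations_of_multiset ?R))"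
      using r2 by (metis of_nat_mult)
    moreover have "real (size (M - {#a#})) = real N - 1" using sz assms(2) by simp
    ultimately show ?thesis using count_remove_real[of a M b] True by simp
  qed
  show ?thesis unfolding cK
  proof -
    have "real (card (permutations_of_multiset ?R)) * real N * (real N - 1)
       = real N * ((real N - 1) * real (card (permutations_of_multiset ?R)))" by (simp add: algebra_simps)
    also have "\<dots> = real N * real (card (permutations_of_multiset (M - {#a#}))) * (real (count M b) - (if a = b then 1 else 0))"
      by (simp only: r2'[symmetric] mult.assoc)
    also have "\<dots> = real (card (permutations_of_multiset M)) * real (count M a) * (real (count M b) - (if a = b then 1 else 0))"
      by (simp only: r1'[symmetric])
    finally show "real (card (permutations_of_multiset ?R)) * real N * (real N - 1) = real (count M a) * (real (count M b) - (if a = b then 1 else 0)) * real (card (permutations_of_multiset M))"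
      by (simp add: algebra_simps)
  qed
next
  case False
  have E: "{xs\<in>permutations_of_multiset M. xs ! 0 = a \<and> xs ! 1 = b} = {}"
  proof (rule ccontr)
    assume "{xs\<in>permutations_of_multiset M. xs ! 0 = a \<and> xs ! 1 = b} \<noteq> {}"
    then obtain xs where m: "mset xs = M" and x0: "xs ! 0 = a" and x1: "xs ! 1 = b"
      by (auto simp: permutations_of_multiset_def)
    have "length xs = N" using m assms(1) by (metis size_mset)
    then obtain u v ys where e: "xs = u # v # ys" using assms(2)
      by (metis One_nat_def Suc_1 Suc_le_length_iff)
    have "u = a" "v = b" using e x0 x1 by auto
    hence "a \<in># M \<and> b \<in># M - {#a#}" using m e by auto
    thus False using False by blast
  qed
  have Z: "real (count M a) * (real (count M b) - (if a = b then 1 else 0)) = 0"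
  proof (cases "a \<in># M")
    case True
    hence "b \<notin># M - {#a#}" using False by blast
    hence "real (count (M - {#a#}) b) = 0" by (simp add: not_in_iff)
    thus ?thesis using count_remove_real[OF True, of b] by simp
  next
    case False thus ?thesis by (simp add: not_in_iff)
  qed
  show ?thesis by (simp only: E card.empty of_nat_0 mult_zero_left Z)
qed


lemma div_aux: "(x::real) * d = y * c \<Longrightarrow> c \<noteq> 0 \<Longrightarrow> d \<noteq> 0 \<Longrightarrow> x / c = y / d"
  by (simp add: field_simps)

lemma marginal:
  fixes lam :: "'a::{finite,linorder} \<Rightarrow> real"
  assumes l: "lam \<in> P1N N" and N: "N \<ge> 2"
  shows "(\<Sum>xs\<in>{xs\<in>tuples N. xs ! 0 = a \<and> xs ! 1 = b}. psiN N lam xs)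
     = lam a * lam b + (1 / (real N - 1)) * (lam a * lam b - (if a = b then lam a else 0))"
proof -
  let ?s = "seqN N lam"
  let ?M = "mset ?s"
  let ?O = "permutations_of_multiset ?M"
  let ?S = "{xs\<in>tuples N. xs ! 0 = a \<and> xs ! 1 = b}"
  let ?K = "{xs\<in>?O. xs ! 0 = a \<and> xs ! 1 = b}"
  have ls: "length ?s = N" using P1N_length[OF l] .
  have szM: "size ?M = N" using ls by simp
  have cO: "real (card ?O) > 0" using finite_permutations_of_multiset permutations_of_multiset_not_empty
    by (simp add: card_gt_0_iff)
  have psiO: "psiN N lam xs = 1 / real (card ?O)" if "xs \<in> ?O" for xs
  proof -
    have "psiN N lam xs * real (card ?O) = 1" unfolding psiN_def
      using symm_dirac_orbit[OF ls] that by (simp add: permutations_of_multiset_def)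
    thus ?thesis using cO by (simp add: field_simps)
  qed
  have KS: "?K \<subseteq> ?S" using orbit_tuples[of ?s] ls by auto
  have "(\<Sum>xs\<in>?S. psiN N lam xs) = (\<Sum>xs\<in>?K. psiN N lam xs)"
  proof -
    have fS: "finite ?S" using finite_tuples[of N] by (rule finite_subset[rotated]) auto
    have Z: "\<forall>x\<in>?S - ?K. psiN N lam x = 0"
      by (auto simp: psiN_def permutations_of_multiset_def intro!: symm_dirac_zero)
    show ?thesis by (rule sum.mono_neutral_right[OF fS KS Z])
  qed
  also have "\<dots> = real (card ?K) / real (card ?O)" using psiO by simp
  also have "\<dots> = real (count ?M a) * (real (count ?M b) - (if a = b then 1 else 0)) / (real N * (real N - 1))"
  proof -
    have "real N * (real N - 1) > 0" using N by simp
    thus ?thesis using card_K[OF szM N, of a b] cO using N by (intro div_aux) (auto simp: mult.assoc)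
  qed
  also have "\<dots> = lam a * lam b + (1 / (real N - 1)) * (lam a * lam b - (if a = b then lam a else 0))"
  proof -
    have "real N - 1 \<noteq> 0" "real N \<noteq> 0" using N by auto
    thus ?thesis using P1N_count[OF l, of a] P1N_count[OF l, of b]
      by (simp add: field_simps)
  qed
  finally show ?thesis .
qed

theorem lemma4p1:
  fixes N :: nat
  assumes "N \<ge> 2"
  shows "(\<forall>\<gamma> :: ('a::{finite,linorder}) list \<Rightarrow> real. \<gamma> \<in> Psym N \<longrightarrow>
            (\<exists>\<alpha>. pmeas (P1N N) \<alpha> \<and>
               (\<forall>xs. \<gamma> xs = (\<Sum>lam\<in>P1N N. \<alpha> lam * psiN N lam xs))))
       \<and> (\<forall>\<mu> :: 'a \<times> 'a \<Rightarrow> real. \<mu> \<in> Nrep N \<longrightarrow>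
            (\<exists>\<alpha>. pmeas (P1N N) \<alpha> \<and>
               (\<forall>a b. \<mu> (a, b) = (\<Sum>lam\<in>P1N N. \<alpha> lam *
                  (lam a * lam b + (1 / (real N - 1)) *
                     (lam a * lam b - (if a = b then lam a else 0)))))))"
proof (intro conjI allI impI)
  have N0: "N > 0" using assms by simp
  fix \<gamma> :: "'a list \<Rightarrow> real" assume "\<gamma> \<in> Psym N"
  thus "\<exists>\<alpha>. pmeas (P1N N) \<alpha> \<and> (\<forall>xs. \<gamma> xs = (\<Sum>lam\<in>P1N N. \<alpha> lam * psiN N lam xs))"
    using part1[OF N0] by blast
next
  have N0: "N > 0" using assms by simp
  fix \<mu> :: "'a \<times> 'a \<Rightarrow> real" assume "\<mu> \<in> Nrep N"
  then obtain \<gamma> where g: "\<gamma> \<in> Psym N" and mu: "\<forall>a b.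
      \<mu> (a, b) = (\<Sum>xs\<in>{xs\<in>tuples N. xs ! 0 = a \<and> xs ! 1 = b}. \<gamma> xs)"
    by (auto simp: Nrep_def)
  obtain \<alpha> where pa: "pmeas (P1N N) \<alpha>" and ga: "\<forall>xs. \<gamma> xs = (\<Sum>lam\<in>P1N N. \<alpha> lam * psiN N lam xs)"
    using part1[OF N0 g] by blast
  show "\<exists>\<alpha>. pmeas (P1N N) \<alpha> \<and>
               (\<forall>a b. \<mu> (a, b) = (\<Sum>lam\<in>P1N N. \<alpha> lam *
                  (lam a * lam b + (1 / (real N - 1)) *
                     (lam a * lam b - (if a = b then lam a else 0)))))"
  proof (intro exI conjI allI)
    show "pmeas (P1N N) \<alpha>" by (rule pa)
    fix a b
    have "\<mu> (a, b) = (\<Sum>xs\<in>{xs\<in>tuples N. xs ! 0 = a \<and> xs ! 1 = b}. \<Sum>lam\<in>P1N N. \<alpha> lam * psiN N lam xs)"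
      using mu ga by simp
    also have "\<dots> = (\<Sum>lam\<in>P1N N. \<alpha> lam * (\<Sum>xs\<in>{xs\<in>tuples N. xs ! 0 = a \<and> xs ! 1 = b}. psiN N lam xs))"
      by (simp add: sum.swap[of _ "P1N N"] sum_distrib_left)
    also have "\<dots> = (\<Sum>lam\<in>P1N N. \<alpha> lam *
                  (lam a * lam b + (1 / (real N - 1)) *
                     (lam a * lam b - (if a = b then lam a else 0))))"
      by (intro sum.cong refl) (simp only: marginal[OF _ assms])
    finally show "\<mu> (a, b) = (\<Sum>lam\<in>P1N N. \<alpha> lam *
                  (lam a * lam b + (1 / (real N - 1)) *
                     (lam a * lam b - (if a = b then lam a else 0))))" .
  qed
qed

end
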